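(* Let $\mathbb{F}$ be a field and $f\in\mathbb{F}(X)$ of degree $d\ge1$. Write $f^{(k)}=g_k/h_k$ in lowest terms, and let $e,\epsilon,\mu,\nu$ be the smallest positive integers $k$ such that, respectively, $g_k(0)=0$, $h_k(0)=0$, $\deg g_k<\deg h_k$, $\deg g_k>\deg h_k$ (each $\infty$ if no such $k$ exists). If $\min\{\mu,\nu\}<\infty$ set $\delta=|\deg g_{\min\{\mu,\nu\}}-\deg h_{\min\{\mu,\nu\}}|$. Let $S_k$ and $T_k$ denote the multiplicity of $0$ as a root of $g_k$ and of $h_k$ respectively (the degree of the lowest-order term). Then: (i) If $\nu<\mu$, then for every integer $i\ge1$, $\deg g_{i\nu}=d^{i\nu}$ and $\deg h_{i\nu}=d^{i\nu}-\delta^i$; and $\deg g_k=\deg h_k=d^k$ whenever $k\not\equiv0\pmod\nu$. (ii) If $\mu<\nu$ and $\epsilon=e=\infty$, then $\deg g_k=\deg h_k=d^k$ for all $k\ge1$ with $k\ne\mu$. (iii) If $\mu<\nu$ and $e<\epsilon$, write $S=S_e$. Then for $k=ie+\mu$ with $i\ge0$ an integer, $\deg g_k=d^k-\delta S^i$ and $\deg h_k=d^k$; for all other $k\ge1$, $\deg g_k=\deg h_k=d^k$. (iv) If $\mu<\nu$ and $\epsilon<\infty$ (so that $e=\epsilon+\mu$), write $T=T_\epsilon$. Then for every $k\ge1$, $\deg g_{\mu+k}=d^{\mu+k}-\delta S_k$ and $\deg h_{\mu+k}=d^{\mu+k}-\delta T_k$. Moreover, for $k=ie$ with $i\ge1$,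 $S_k=\delta^iT^i$ and $T_k=0$; for $k=ie+\epsilon$ with $i\ge0$, $T_k=\delta^iT^{i+1}$ and $S_k=0$; and for all other $k\ge1$, $S_k=T_k=0$.
   Context: Rational functions are in lowest terms with $\deg(g/h)=\max\{\deg g,\deg h\}$; iterates $f^{(k)}$ are $k$-fold compositions of $f$. *)

theory Defs
  imports "HOL-Computational_Algebra.Computational_Algebra"
          "HOL-Computational_Algebra.Normalized_Fraction"
          "HOL-Library.Extended_Nat"
begin

text \<open>Rational functions over a field are elements of the fraction field of 'a poly.
  A rational function is written in lowest terms g/h via quot_of_fract
  (g, h coprime, h normalized).\<close>

type_synonym 'a ratfun = "'a poly fract"

definition rnum :: "'a::field_gcd ratfun \<Rightarrow> 'a poly" where
  "rnum f = fst (quot_of_fract f)"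

definition rden :: "'a::field_gcd ratfun \<Rightarrow> 'a poly" where
  "rden f = snd (quot_of_fract f)"

definition rdeg :: "'a::field_gcd ratfun \<Rightarrow> nat" where
  "rdeg f = max (degree (rnum f)) (degree (rden f))"

definition rcomp :: "'a::field_gcd ratfun \<Rightarrow> 'a ratfun \<Rightarrow> 'a ratfun" where
  "rcomp f F = poly (map_poly (\<lambda>c. to_fract [:c:]) (rnum f)) F / poly (map_poly (\<lambda>c. to_fract [:c:]) (rden f)) F"

definition riter :: "'a::field_gcd ratfun \<Rightarrow> nat \<Rightarrow> 'a ratfun" where
  "riter f k = (rcomp f ^^ k) (to_fract [:0, 1:])"

definition gk :: "'a::field_gcd ratfun \<Rightarrow> nat \<Rightarrow> 'a poly" where
  "gk f k = rnum (riter f k)"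

definition hk :: "'a::field_gcd ratfun \<Rightarrow> nat \<Rightarrow> 'a poly" where
  "hk f k = rden (riter f k)"

definition least_pos :: "(nat \<Rightarrow> bool) \<Rightarrow> enat" where
  "least_pos P = (if \<exists>k>0. P k then enat (LEAST k. 0 < k \<and> P k) else \<infinity>)"

definition e_idx :: "'a::field_gcd ratfun \<Rightarrow> enat" where
  "e_idx f = least_pos (\<lambda>k. poly (gk f k) 0 = 0)"

definition eps_idx :: "'a::field_gcd ratfun \<Rightarrow> enat" where
  "eps_idx f = least_pos (\<lambda>k. poly (hk f k) 0 = 0)"

definition mu_idx :: "'a::field_gcd ratfun \<Rightarrow> enat" where
  "mu_idx f = least_pos (\<lambda>k. degree (gk f k) < degree (hk f k))"

definition nu_idx :: "'a::field_gcd ratfun \<Rightarrow> enat" where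
  "nu_idx f = least_pos (\<lambda>k. degree (gk f k) > degree (hk f k))"

text \<open>delta = |deg g_m - deg h_m| with m = min(mu, nu) (meaningful when m is finite).\<close>
definition delta :: "'a::field_gcd ratfun \<Rightarrow> nat" where
  "delta f = (let m = the_enat (min (mu_idx f) (nu_idx f))
              in nat \<bar>int (degree (gk f m)) - int (degree (hk f m))\<bar>)"

definition Sk :: "'a::field_gcd ratfun \<Rightarrow> nat \<Rightarrow> nat" where
  "Sk f k = order 0 (gk f k)"

definition Tk :: "'a::field_gcd ratfun \<Rightarrow> nat \<Rightarrow> nat" where
  "Tk f k = order 0 (hk f k)"

end

theory Submission
  imports Defs
begin


definition cst :: "'a::field_gcd \<Rightarrow> 'a poly fract" where "cst x = to_fract [:x:]"
definition pe :: "'a::field_gcd poly \<Rightarrow> 'a poly fract \<Rightarrow> 'a poly fract" where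
  "pe p F = poly (map_poly cst p) F"

lemma cst_0[simp]: "cst 0 = 0" by (simp add: cst_def)
lemma cst_1[simp]: "cst 1 = 1" by (simp add: cst_def one_pCons[symmetric])
lemma cst_add[simp]: "cst (a+b) = cst a + cst b" unfolding cst_def to_fract_add[symmetric] by simp
lemma cst_mult[simp]: "cst (a*b) = cst a * cst b" by (simp add: cst_def flip: to_fract_mult)
lemma cst_eq0[simp]: "cst a = 0 \<longleftrightarrow> a = 0" by (simp add: cst_def)
lemma cst_sum: "cst (sum f A) = (\<Sum>x\<in>A. cst (f x))"
  by (induct A rule: infinite_finite_induct) auto

lemma map_poly_cst_mult: "map_poly cst (p*q) = map_poly cst p * map_poly cst q"
  by (rule poly_eqI) (simp add: coeff_map_poly coeff_mult cst_sum)
lemma map_poly_cst_add: "map_poly cst (p+q) = map_poly cst p + map_poly cst q"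
  by (rule poly_eqI) (simp add: coeff_map_poly)

lemma pe_mult: "pe (p*q) F = pe p F * pe q F" by (simp add: pe_def map_poly_cst_mult)
lemma pe_add: "pe (p+q) F = pe p F + pe q F" by (simp add: pe_def map_poly_cst_add)
lemma pe_pCons: "pe (pCons a p) F = cst a + F * pe p F" by (simp add: pe_def map_poly_pCons)
lemma pe_const[simp]: "pe [:a:] F = cst a" using pe_pCons[of a 0 F] by (simp add: pe_def)
lemma pe_0[simp]: "pe 0 F = 0" by (simp add: pe_def)
lemma pe_1[simp]: "pe 1 F = 1" by (simp add: pe_def)
lemma pe_X[simp]: "pe [:0,1:] F = F" by (simp add: pe_pCons)
lemma pe_altdef: "degree p \<le> N \<Longrightarrow> pe p F = (\<Sum>i\<le>N. cst (coeff p i) * F^i)"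
  unfolding pe_def by (simp add: poly_altdef degree_map_poly coeff_map_poly,
    intro sum.mono_neutral_left) (auto simp: coeff_eq_0)

definition hom :: "nat \<Rightarrow> 'a::field_gcd poly \<Rightarrow> 'a poly \<Rightarrow> 'a poly \<Rightarrow> 'a poly" where
  "hom m p G H = (\<Sum>i\<le>m. smult (coeff p i) (G^i * H^(m-i)))"

lemma to_fract_smult: "to_fract (smult c q) = cst c * to_fract q"
  by (simp add: cst_def flip: to_fract_mult)

lemma to_fract_power[simp]: "to_fract (x^n) = to_fract x ^ n"
  by (induct n) auto

lemma rcomp_pe: "rcomp x F = pe (rnum x) F / pe (rden x) F"
  unfolding rcomp_def pe_def cst_def[abs_def] ..

lemma EV:
  assumes "degree p \<le> m" "H \<noteq> 0"
  shows "pe p (to_fract G / to_fract H) = to_fract (hom m p G H) / to_fract H ^ m"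
proof -
  have hz: "to_fract H \<noteq> 0" using assms by simp
  have "pe p (to_fract G / to_fract H) = (\<Sum>i\<le>m. cst (coeff p i) * (to_fract G / to_fract H)^i)"
    using assms by (simp add: pe_altdef)
  also have "\<dots> = (\<Sum>i\<le>m. cst (coeff p i) * to_fract G ^ i * to_fract H ^ (m-i) / to_fract H ^ m)"
  proof (rule sum.cong[OF refl])
    fix i assume "i \<in> {..m}"
    then have "to_fract H ^ m = to_fract H ^ i * to_fract H ^ (m-i)"
      by (simp flip: power_add)
    then show "cst (coeff p i) * (to_fract G / to_fract H)^i = cst (coeff p i) * to_fract G ^ i * to_fract H ^ (m-i) / to_fract H ^ m"
      using hz by (simp add: power_divide)
  qed
  also have "\<dots> = to_fract (hom m p G H) / to_fract H ^ m"
    by (simp add: hom_def to_fract_smult sum_divide_distrib mult.assoc)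
  finally show ?thesis .
qed

lemma rnum_rden: "x = to_fract (rnum x) / to_fract (rden x)"
  by (metis Fract_conv_to_fract Fract_quot_of_fract rden_def rnum_def)
lemma rden_nz[simp]: "rden x \<noteq> 0" by (simp add: rden_def)
lemma coprime_rnum_rden: "coprime (rnum x) (rden x)"
  by (simp add: rnum_def rden_def coprime_quot_of_fract)
lemma deg_rnum_le: "degree (rnum x) \<le> rdeg x" by (simp add: rdeg_def)
lemma deg_rden_le: "degree (rden x) \<le> rdeg x" by (simp add: rdeg_def)

lemma rcomp_hom:
  assumes "H \<noteq> 0"
  shows "rcomp x (to_fract G / to_fract H) = to_fract (hom (rdeg x) (rnum x) G H) / to_fract (hom (rdeg x) (rden x) G H)"
proof -
  have "to_fract H ^ rdeg x \<noteq> 0" using assms by simp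
  then show ?thesis using assms unfolding rcomp_pe
    by (simp add: EV[OF deg_rnum_le assms] EV[OF deg_rden_le assms])
qed

lemma hom_shift:
  assumes "degree p \<le> k" "k \<le> m"
  shows "hom m p G H = H^(m-k) * hom k p G H"
proof -
  have "hom m p G H = (\<Sum>i\<le>k. smult (coeff p i) (G^i * H^(m-i)))"
    unfolding hom_def using assms
    by (intro sum.mono_neutral_right) (auto simp: coeff_eq_0)
  also have "\<dots> = (\<Sum>i\<le>k. H^(m-k) * smult (coeff p i) (G^i * H^(k-i)))"
  proof (rule sum.cong[OF refl])
    fix i assume "i \<in> {..k}"
    then have "H^(m-i) = H^(m-k) * H^(k-i)" using assms by (simp flip: power_add)
    then show "smult (coeff p i) (G^i * H^(m-i)) = H^(m-k) * smult (coeff p i) (G^i * H^(k-i))"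
      by (simp add: algebra_simps)
  qed
  also have "\<dots> = H^(m-k) * hom k p G H" by (simp add: hom_def sum_distrib_left)
  finally show ?thesis .
qed

lemma hom_split:
  assumes "t \<le> m"
  shows "hom m p G H = smult (coeff p t) (G^t * H^(m-t)) + (\<Sum>i\<in>{..m}-{t}. smult (coeff p i) (G^i * H^(m-i)))"
  unfolding hom_def using assms by (subst sum.remove[of _ t]) auto

lemma hom_modH: "H dvd (hom m p G H - smult (coeff p m) (G^m))"
proof -
  have "hom m p G H - smult (coeff p m) (G^m) = (\<Sum>i\<in>{..m}-{m}. smult (coeff p i) (G^i * H^(m-i)))"
    using hom_split[of m m p G H] by simp
  also have "H dvd \<dots>"
  proof (rule dvd_sum)
    fix i assume "i \<in> {..m} - {m}"
    then have "m - i = Suc (m - i - 1)" by auto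
    then show "H dvd smult (coeff p i) (G^i * H^(m-i))"
      by (metis dvd_mult dvd_smult dvd_triv_left power_Suc)
  qed
  finally show ?thesis .
qed

lemma term_nz: "(c::'a::field) \<noteq> 0 \<Longrightarrow> (G::'a poly) \<noteq> 0 \<Longrightarrow> H \<noteq> 0 \<Longrightarrow> smult c (G^i * H^(m-i)) \<noteq> 0"
  by simp
lemma deg_term: "(c::'a::field) \<noteq> 0 \<Longrightarrow> (G::'a poly) \<noteq> 0 \<Longrightarrow> H \<noteq> 0 \<Longrightarrow>
   degree (smult c (G^i * H^(m-i))) = i * degree G + (m-i) * degree H"
  by (simp add: degree_mult_eq degree_power_eq)

lemma deg_prod: "(G::'a::field poly) \<noteq> 0 \<Longrightarrow> H \<noteq> 0 \<Longrightarrow>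
   degree (G^i * H^(m-i)) = i * degree G + (m-i) * degree H"
  by (simp add: degree_mult_eq degree_power_eq)

lemma sum_deg_lt:
  assumes "finite S" "\<And>i. i \<in> S \<Longrightarrow> f i = 0 \<or> degree (f i) < D"
  shows "sum f S = 0 \<or> degree (sum f S) < D"
proof (cases "D = 0")
  case True
  then have "\<forall>i\<in>S. f i = 0" using assms by auto
  then show ?thesis by simp
next
  case False
  have "degree (sum f S) \<le> D - 1"
    using assms(2) False by (intro degree_sum_le[OF assms(1)]) (fastforce)
  then show ?thesis using False by linarith
qed

lemma deg_dom:
  fixes a b :: "'a::field poly"
  assumes "a \<noteq> 0" "b = 0 \<or> degree b < degree a"
  shows "a + b \<noteq> 0 \<and> degree (a+b) = degree a"
proof -
  have d: "degree (a+b) = degree a" using assms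
    by (auto intro: degree_add_eq_left)
  have "a + b \<noteq> 0"
  proof
    assume "a + b = 0"
    then have "b = -a" by (simp add: eq_neg_iff_add_eq_0 add.commute)
    then show False using assms by auto
  qed
  then show ?thesis using d by simp
qed

lemma X_pow_dvd_order: "[:0,1:]^(order 0 p) dvd p"
  using order_1[of 0 p] by simp

lemma coeff_lt_order: "i < order 0 p \<Longrightarrow> coeff p i = 0"
proof -
  assume i: "i < order 0 p"
  obtain q where q: "p = [:0,1:]^(order 0 p) * q" using X_pow_dvd_order[of p] by (auto elim: dvdE)
  have "coeff p i = coeff (monom 1 (order 0 p) * q) i" by (subst q) (simp add: monom_altdef)
  also have "\<dots> = 0" using i by (simp add: coeff_monom_mult)
  finally show ?thesis .
qed

lemma coeff_order_nz: "p \<noteq> 0 \<Longrightarrow> coeff p (order 0 p) \<noteq> 0"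
proof -
  assume p: "p \<noteq> 0"
  obtain q where q: "p = [:-0,1:]^(order 0 p) * q" "\<not> [:-0,1:] dvd q" using order_decomp[OF p, of 0] by blast
  have "coeff q 0 \<noteq> 0" using q(2) by (simp add: dvd_iff_poly_eq_0 poly_0_coeff_0)
  moreover have "coeff p (order 0 p) = coeff q 0"
    by (subst q(1)) (simp add: monom_altdef[of 1, simplified, symmetric] coeff_monom_mult)
  ultimately show ?thesis by simp
qed

lemma helper_L:
  fixes t i n dG dH :: nat
  assumes "t < i" "i \<le> n" "dG < dH"
  shows "i*dG + (n-i)*dH < t*dG + (n-t)*dH"
proof -
  obtain j where j: "i = t + j" "j > 0" using assms by (metis less_imp_add_positive)
  obtain r where r: "n = i + r" using assms by (metis le_iff_add)
  have "j*dG < j*dH" using j assms by simp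
  then show ?thesis using j r by (simp add: algebra_simps)
qed

lemma helper_G:
  fixes t i n dG dH :: nat
  assumes "i < t" "t \<le> n" "dH < dG"
  shows "i*dG + (n-i)*dH < t*dG + (n-t)*dH"
proof -
  obtain j where j: "t = i + j" "j > 0" using assms by (metis less_imp_add_positive)
  obtain r where r: "n = t + r" using assms by (metis le_iff_add)
  have "j*dH < j*dG" using j assms by simp
  then show ?thesis using j r by (simp add: algebra_simps)
qed

lemma DEG_L:
  assumes "p \<noteq> 0" "degree p \<le> n" "G \<noteq> 0" "H \<noteq> 0" "degree G < degree H"
  shows "hom n p G H \<noteq> 0 \<and> degree (hom n p G H) = order 0 p * degree G + (n - order 0 p) * degree H"
proof -
  define t where "t = order 0 p"
  have tn: "t \<le> n" using order_degree[OF assms(1), of 0] assms(2) t_def by simp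
  have ct: "coeff p t \<noteq> 0" using coeff_order_nz[OF assms(1)] t_def by simp
  let ?a = "smult (coeff p t) (G^t * H^(n-t))"
  let ?b = "(\<Sum>i\<in>{..n}-{t}. smult (coeff p i) (G^i * H^(n-i)))"
  have a: "?a \<noteq> 0" "degree ?a = t * degree G + (n-t) * degree H"
    using ct assms deg_term[OF ct assms(3) assms(4)] by auto
  have b: "?b = 0 \<or> degree ?b < degree ?a"
  proof (rule sum_deg_lt)
    fix i assume i: "i \<in> {..n}-{t}"
    show "smult (coeff p i) (G^i * H^(n-i)) = 0 \<or> degree (smult (coeff p i) (G^i * H^(n-i))) < degree ?a"
    proof (cases "coeff p i = 0")
      case False
      then have "t \<le> i" using coeff_lt_order[of i p] t_def by fastforce
      then have "t < i" using i by auto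
      then show ?thesis using False assms a(2) i helper_L[of t i n "degree G" "degree H"]
        by (simp add: deg_prod)
    qed simp
  qed simp
  show ?thesis using deg_dom[OF a(1) b] hom_split[OF tn, of p G H] a(2) t_def by simp
qed

lemma DEG_G:
  assumes "p \<noteq> 0" "degree p \<le> n" "G \<noteq> 0" "H \<noteq> 0" "degree H < degree G"
  shows "hom n p G H \<noteq> 0 \<and> degree (hom n p G H) = degree p * degree G + (n - degree p) * degree H"
proof -
  define t where "t = degree p"
  have tn: "t \<le> n" using assms(2) t_def by simp
  have ct: "coeff p t \<noteq> 0" using assms(1) t_def by simp
  let ?a = "smult (coeff p t) (G^t * H^(n-t))"
  let ?b = "(\<Sum>i\<in>{..n}-{t}. smult (coeff p i) (G^i * H^(n-i)))"
  have a: "?a \<noteq> 0" "degree ?a = t * degree G + (n-t) * degree H"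
    using ct assms deg_term[OF ct assms(3) assms(4)] by auto
  have b: "?b = 0 \<or> degree ?b < degree ?a"
  proof (rule sum_deg_lt)
    fix i assume i: "i \<in> {..n}-{t}"
    show "smult (coeff p i) (G^i * H^(n-i)) = 0 \<or> degree (smult (coeff p i) (G^i * H^(n-i))) < degree ?a"
    proof (cases "coeff p i = 0")
      case False
      then have "i \<le> t" using le_degree t_def by blast
      then have "i < t" using i by auto
      then have "i * degree G + (n-i) * degree H < t * degree G + (n-t) * degree H"
        using tn assms(5) by (rule helper_G)
      then show ?thesis using False assms a(2) by (simp add: deg_prod)
    qed simp
  qed simp
  show ?thesis using deg_dom[OF a(1) b] hom_split[OF tn, of p G H] a(2) t_def by simp
qed

lemma order_dom:
  fixes a b :: "'a::field poly"
  assumes "a \<noteq> 0" "[:0,1:]^(Suc (order 0 a)) dvd b"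
  shows "order 0 (a + b) = order 0 a"
proof -
  have "[:0,1:]^(order 0 a) dvd [:0,1:]^(Suc (order 0 a))" by (rule le_imp_power_dvd) simp
  then have "[:0,1:]^(order 0 a) dvd a + b" using assms X_pow_dvd_order[of a]
    by (meson dvd_add dvd_trans)
  moreover have "\<not> [:0,1:]^(Suc (order 0 a)) dvd a + b"
  proof
    assume "[:0,1:]^(Suc (order 0 a)) dvd a + b"
    then have "[:0,1:]^(Suc (order 0 a)) dvd (a + b) - b" using assms(2) by (rule dvd_diff)
    then have "[:- 0,1:]^(Suc (order 0 a)) dvd a" by simp
    then have "a = 0 \<or> Suc (order 0 a) \<le> order 0 a" by (simp only: order_divides)
    then show False using assms(1) by simp
  qed
  ultimately show ?thesis using order_unique_lemma[of 0 "order 0 a" "a+b"] by simp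
qed

lemma order_power: "(p::'a::idom poly) \<noteq> 0 \<Longrightarrow> order a (p^k) = k * order a p"
  by (induct k) (auto simp: order_mult)

lemma order_term: "(c::'a::field) \<noteq> 0 \<Longrightarrow> (G::'a poly) \<noteq> 0 \<Longrightarrow> H \<noteq> 0 \<Longrightarrow>
   order 0 (smult c (G^i * H^(m-i))) = i * order 0 G + (m-i) * order 0 H"
  by (simp add: order_smult order_mult order_power)

lemma X_pow_dvd_pow:
  assumes "[:0,1:]^s dvd G" "k \<le> s * i"
  shows "[:0,1:]^k dvd (G::'a::field poly)^i"
proof -
  have "[:0,1:]^(s*i) dvd G^i" using assms(1) by (simp add: power_mult dvd_power_same)
  moreover have "[:0,1:]^k dvd [:0,1:]^(s*i)" using assms(2) by (simp add: le_imp_power_dvd)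
  ultimately show ?thesis by (meson dvd_trans)
qed

lemma ORD1:
  assumes "p \<noteq> 0" "degree p \<le> n" "G \<noteq> 0" "H \<noteq> 0" "poly G 0 = 0" "poly H 0 \<noteq> 0"
  shows "order 0 (hom n p G H) = order 0 p * order 0 G"
proof -
  define t where "t = order 0 p"
  define s where "s = order 0 G"
  have s1: "s \<ge> 1" using assms order_gt_0_iff[of G 0] s_def by simp
  have h0: "order 0 H = 0" using assms(6) by (rule order_0I)
  have tn: "t \<le> n" using order_degree[OF assms(1), of 0] assms(2) t_def by simp
  have ct: "coeff p t \<noteq> 0" using coeff_order_nz[OF assms(1)] t_def by simp
  let ?a = "smult (coeff p t) (G^t * H^(n-t))"
  let ?b = "(\<Sum>i\<in>{..n}-{t}. smult (coeff p i) (G^i * H^(n-i)))"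
  have a: "?a \<noteq> 0" "order 0 ?a = t * s"
    using ct assms order_term[OF ct assms(3) assms(4), of t n] h0 s_def by auto
  have "[:0,1:]^(Suc (order 0 ?a)) dvd ?b"
  proof (rule dvd_sum)
    fix i assume i: "i \<in> {..n}-{t}"
    show "[:0,1:]^(Suc (order 0 ?a)) dvd smult (coeff p i) (G^i * H^(n-i))"
    proof (cases "coeff p i = 0")
      case False
      then have "t \<le> i" using coeff_lt_order[of i p] t_def by fastforce
      then have "t < i" using i by auto
      then have "s * (t+1) \<le> s * i" by (intro mult_le_mono2) simp
      then have "Suc (t*s) \<le> s * i" using s1 by (simp add: algebra_simps)
      then have "[:0,1:]^(Suc (t*s)) dvd G^i" using X_pow_dvd_order[of G] s_def X_pow_dvd_pow by blast
      then show ?thesis using a(2) by (simp add: dvd_smult)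
    qed simp
  qed
  then show ?thesis using order_dom[OF a(1)] hom_split[OF tn, of p G H] a(2) t_def s_def by simp
qed

lemma ORD2:
  assumes "p \<noteq> 0" "degree p \<le> n" "G \<noteq> 0" "H \<noteq> 0" "poly H 0 = 0" "poly G 0 \<noteq> 0"
  shows "order 0 (hom n p G H) = (n - degree p) * order 0 H"
proof -
  define t where "t = degree p"
  define s where "s = order 0 H"
  have s1: "s \<ge> 1" using assms order_gt_0_iff[of H 0] s_def by simp
  have h0: "order 0 G = 0" using assms(6) by (rule order_0I)
  have tn: "t \<le> n" using assms(2) t_def by simp
  have ct: "coeff p t \<noteq> 0" using assms(1) t_def by simp
  let ?a = "smult (coeff p t) (G^t * H^(n-t))"
  let ?b = "(\<Sum>i\<in>{..n}-{t}. smult (coeff p i) (G^i * H^(n-i)))"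
  have a: "?a \<noteq> 0" "order 0 ?a = (n-t) * s"
    using ct assms order_term[OF ct assms(3) assms(4), of t n] h0 s_def by auto
  have "[:0,1:]^(Suc (order 0 ?a)) dvd ?b"
  proof (rule dvd_sum)
    fix i assume i: "i \<in> {..n}-{t}"
    show "[:0,1:]^(Suc (order 0 ?a)) dvd smult (coeff p i) (G^i * H^(n-i))"
    proof (cases "coeff p i = 0")
      case False
      then have "i \<le> t" using le_degree t_def by blast
      then have "i < t" using i by auto
      then have "s * (n-t+1) \<le> s * (n-i)" using tn by (intro mult_le_mono2) simp
      then have "Suc ((n-t)*s) \<le> s * (n-i)" using s1 by (simp add: algebra_simps)
      then have "[:0,1:]^(Suc ((n-t)*s)) dvd H^(n-i)" using X_pow_dvd_order[of H] s_def X_pow_dvd_pow by blast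
      then show ?thesis using a(2) by (simp add: dvd_smult)
    qed simp
  qed
  then show ?thesis using order_dom[OF a(1)] hom_split[OF tn, of p G H] a(2) t_def s_def by simp
qed

lemma HOM_NZ:
  assumes "coprime G H" "H \<noteq> 0" "p \<noteq> 0" "degree p \<le> m" "degree G \<ge> 1 \<or> degree H \<ge> 1"
  shows "hom m p G H \<noteq> 0"
proof -
  define k where "k = degree p"
  have eq: "hom m p G H = H^(m-k) * hom k p G H" using assms k_def by (intro hom_shift) auto
  have "hom k p G H \<noteq> 0"
  proof (cases "degree H = 0")
    case True
    then have "degree H < degree G" "G \<noteq> 0" using assms(5) by auto
    moreover have "degree p \<le> k" by (simp add: k_def)
    ultimately show ?thesis using DEG_G[OF assms(3) _ _ assms(2), of k] by blast
  next
    case False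
    show ?thesis
    proof
      assume h0: "hom k p G H = 0"
      have "H dvd (hom k p G H - smult (coeff p k) (G^k))" by (rule hom_modH)
      then have "H dvd smult (coeff p k) (G^k)" using h0 by simp
      moreover have "coeff p k \<noteq> 0" using assms(3) k_def by simp
      ultimately have hd: "H dvd G^k" using dvd_smult_cancel by blast
      have "coprime H G" using assms(1) by (rule coprime_commute[THEN iffD1])
      then have cop: "coprime H (G^k)" by simp
      have "is_unit H" by (rule coprime_common_divisor[OF cop dvd_refl hd])
      then show False using is_unit_iff_degree[OF assms(2)] False by simp
    qed
  qed
  then show ?thesis using eq assms(2) by simp
qed


lemma COP:
  fixes x :: "'a::field_gcd ratfun"
  assumes "coprime G H" "H \<noteq> 0" "degree G \<ge> 1 \<or> degree H \<ge> 1"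
  shows "coprime (hom (rdeg x) (rnum x) G H) (hom (rdeg x) (rden x) G H) \<and> hom (rdeg x) (rden x) G H \<noteq> 0"
proof -
  define n where "n = rdeg x"
  define g where "g = rnum x"
  define h where "h = rden x"
  define A where "A = hom n g G H"
  define B where "B = hom n h G H"
  have Bnz: "B \<noteq> 0" unfolding B_def h_def n_def
    using HOM_NZ[OF assms(1,2) rden_nz deg_rden_le assms(3)] .
  have "coprime A B"
  proof (rule ccontr)
    assume "\<not> coprime A B"
    then obtain c where c: "c dvd A" "c dvd B" "\<not> is_unit c" by (rule not_coprimeE)
    have "c \<noteq> 0" using c(2) Bnz by auto
    then obtain q where q: "q dvd c" "prime q" using prime_divisor_exists c(3) by blast
    have qA: "q dvd A" using dvd_trans[OF q(1) c(1)] .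
    have qB: "q dvd B" using dvd_trans[OF q(1) c(2)] .
    define u where "u = fst (bezout_coefficients g h)"
    define v where "v = snd (bezout_coefficients g h)"
    have "coprime g h" unfolding g_def h_def by (rule coprime_rnum_rden)
    then have uv: "u * g + v * h = 1" unfolding u_def v_def
      using bezout_coefficients_fst_snd[of g h] by simp
    define N where "N = max (degree u) (degree v)"
    define F where "F = to_fract G / to_fract H"
    have hz: "to_fract H \<noteq> 0" using assms(2) by simp
    have "pe u F * pe g F + pe v F * pe h F = 1"
      using arg_cong[OF uv, of "\<lambda>p. pe p F"] by (simp add: pe_mult pe_add)
    moreover have "pe u F = to_fract (hom N u G H) / to_fract H ^ N"
      unfolding F_def by (rule EV) (auto simp: N_def assms(2))
    moreover have "pe v F = to_fract (hom N v G H) / to_fract H ^ N"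
      unfolding F_def by (rule EV) (auto simp: N_def assms(2))
    moreover have "pe g F = to_fract A / to_fract H ^ n"
      unfolding F_def A_def by (rule EV) (auto simp: n_def g_def deg_rnum_le assms(2))
    moreover have "pe h F = to_fract B / to_fract H ^ n"
      unfolding F_def B_def by (rule EV) (auto simp: n_def h_def deg_rden_le assms(2))
    ultimately have "(to_fract (hom N u G H) / to_fract H ^ N) * (to_fract A / to_fract H ^ n) +
       (to_fract (hom N v G H) / to_fract H ^ N) * (to_fract B / to_fract H ^ n) = 1"
      by simp
    then have "(to_fract (hom N u G H) * to_fract A + to_fract (hom N v G H) * to_fract B) / (to_fract H ^ N * to_fract H ^ n) = 1"
      by (simp only: add_divide_distrib times_divide_times_eq)
    then have "to_fract (hom N u G H) * to_fract A + to_fract (hom N v G H) * to_fract B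
        = to_fract H ^ N * to_fract H ^ n"
      using hz by (simp add: divide_eq_eq)
    then have "to_fract (hom N u G H * A + hom N v G H * B) = to_fract (H^(N+n))"
      by (simp add: power_add)
    then have "hom N u G H * A + hom N v G H * B = H^(N+n)"
      by (simp only: to_fract_eq_iff)
    moreover have "q dvd hom N u G H * A + hom N v G H * B"
      using dvd_mult[OF qA] dvd_mult[OF qB] by (rule dvd_add)
    ultimately have "q dvd H^(N+n)" by simp
    then have qH: "q dvd H" by (rule prime_dvd_power[OF q(2)])
    have "\<exists>p\<in>{g,h}. coeff p n \<noteq> 0"
    proof (cases "degree h \<le> degree g")
      case True
      then have n: "n = degree g" by (simp add: n_def rdeg_def g_def h_def)
      show ?thesis
      proof (cases "g = 0")
        case True
        then have "n = 0" using n by simp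
        moreover have "degree h = 0" using \<open>g = 0\<close> \<open>degree h \<le> degree g\<close> by simp
        ultimately have "coeff h n \<noteq> 0" using rden_nz[of x] h_def
          by (metis leading_coeff_0_iff)
        then show ?thesis by blast
      qed (use n in auto)
    next
      case False
      then have "n = degree h" by (simp add: n_def rdeg_def g_def h_def)
      then show ?thesis using h_def by auto
    qed
    then obtain p where p: "p \<in> {g,h}" "coeff p n \<noteq> 0" by blast
    have "q dvd hom n p G H" using p qA qB A_def B_def by auto
    moreover have "q dvd hom n p G H - smult (coeff p n) (G^n)"
      using dvd_trans[OF qH hom_modH] .
    ultimately have "q dvd hom n p G H - (hom n p G H - smult (coeff p n) (G^n))"
      by (rule dvd_diff)
    then have "q dvd smult (coeff p n) (G^n)" by simp
    then have "q dvd G^n" using p(2) by (rule dvd_smult_cancel)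
    then have qG: "q dvd G" by (rule prime_dvd_power[OF q(2)])
    have "is_unit q" by (rule coprime_common_divisor[OF assms(1) qG qH])
    then show False using q(2) not_prime_unit by blast
  qed
  then show ?thesis using Bnz unfolding A_def B_def n_def g_def h_def by simp
qed

lemma quot_unit:
  assumes "coprime A B" "B \<noteq> 0"
  shows "\<exists>c. is_unit c \<and> A = rnum (to_fract A / to_fract B) * c \<and> B = rden (to_fract A / to_fract B) * c"
proof -
  have q: "quot_of_fract (to_fract A / to_fract B) = normalize_quot (A, B)"
    by (simp add: Fract_conv_to_fract[symmetric] quot_of_fract_quot_to_fract[of "(A,B)", unfolded quot_to_fract_def, simplified])
  obtain d where d: "A = fst (normalize_quot (A,B)) * d" "B = snd (normalize_quot (A,B)) * d"
      "d dvd A" "d dvd B" "d \<noteq> 0"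
    using normalize_quotE[OF assms(2), of A] by blast
  have "is_unit d" by (rule coprime_common_divisor[OF assms(1) d(3) d(4)])
  then show ?thesis using d(1,2) q unfolding rnum_def rden_def by auto
qed

lemma rdeg_ge1: "rdeg F \<ge> 1 \<Longrightarrow> degree (rnum F) \<ge> 1 \<or> degree (rden F) \<ge> 1"
  by (auto simp: rdeg_def max_def split: if_splits)

lemma COMP:
  fixes x F :: "'a::field_gcd ratfun"
  assumes "rdeg F \<ge> 1"
  shows "\<exists>c. is_unit c \<and> hom (rdeg x) (rnum x) (rnum F) (rden F) = rnum (rcomp x F) * c
          \<and> hom (rdeg x) (rden x) (rnum F) (rden F) = rden (rcomp x F) * c"
proof -
  have F: "rcomp x F = to_fract (hom (rdeg x) (rnum x) (rnum F) (rden F)) / to_fract (hom (rdeg x) (rden x) (rnum F) (rden F))"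
    using rcomp_hom[OF rden_nz[of F], of x "rnum F"] rnum_rden[of F] by simp
  have "coprime (hom (rdeg x) (rnum x) (rnum F) (rden F)) (hom (rdeg x) (rden x) (rnum F) (rden F)) \<and>
     hom (rdeg x) (rden x) (rnum F) (rden F) \<noteq> 0"
    by (rule COP[OF coprime_rnum_rden rden_nz rdeg_ge1[OF assms]])
  then show ?thesis unfolding F using quot_unit by blast
qed

lemma unit_facts:
  fixes a c :: "'a::field poly"
  assumes "is_unit c" "A = a * c"
  shows "degree A = degree a" "poly A 0 = 0 \<longleftrightarrow> poly a 0 = 0" "order 0 A = order 0 a"
proof -
  have c00: "c \<noteq> 0" using assms(1) by auto
  have c0: "c \<noteq> 0" "degree c = 0" using assms(1) is_unit_iff_degree[OF c00] c00 by auto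
  have "coeff c 0 \<noteq> 0" by (metis c0 leading_coeff_0_iff)
  then have pc: "poly c 0 \<noteq> 0" by (simp add: poly_0_coeff_0)
  show "degree A = degree a" using assms c0 by (cases "a = 0") (auto simp: degree_mult_eq)
  show "poly A 0 = 0 \<longleftrightarrow> poly a 0 = 0" using assms pc by simp
  show "order 0 A = order 0 a" using assms c0 pc
    by (cases "a = 0") (auto simp: order_mult order_0I)
qed

definition TP :: "'a::field_gcd ratfun \<Rightarrow> bool" where
  "TP F = (\<forall>p. p \<noteq> 0 \<longrightarrow> pe p F \<noteq> 0)"

lemma TP_of:
  assumes "rdeg F \<ge> 1"
  shows "TP F"
  unfolding TP_def
proof (intro allI impI)
  fix p :: "'a poly" assume p: "p \<noteq> 0"
  have "pe p F = to_fract (hom (degree p) p (rnum F) (rden F)) / to_fract (rden F) ^ (degree p)"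
    using EV[OF order_refl rden_nz, of p "rnum F" F] rnum_rden[of F] by simp
  moreover have "hom (degree p) p (rnum F) (rden F) \<noteq> 0"
    by (rule HOM_NZ[OF coprime_rnum_rden rden_nz p order_refl rdeg_ge1[OF assms]])
  ultimately show "pe p F \<noteq> 0" by simp
qed

lemma REP:
  assumes "q \<noteq> 0" "TP F"
  shows "rcomp (to_fract p / to_fract q) F = pe p F / pe q F"
proof -
  define x where "x = to_fract p / to_fract q"
  have "x = to_fract (rnum x) / to_fract (rden x)" by (rule rnum_rden)
  then have "to_fract p * to_fract (rden x) = to_fract q * to_fract (rnum x)"
    using assms(1) unfolding x_def by (simp add: divide_eq_eq eq_divide_eq field_simps)
  then have "p * rden x = q * rnum x" by (simp flip: to_fract_mult)
  then have e: "pe p F * pe (rden x) F = pe q F * pe (rnum x) F" by (metis pe_mult)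
  have "pe q F \<noteq> 0" "pe (rden x) F \<noteq> 0" using assms rden_nz unfolding TP_def by auto
  then have "pe (rnum x) F / pe (rden x) F = pe p F / pe q F" using e
    by (simp add: divide_eq_eq eq_divide_eq field_simps)
  then show ?thesis unfolding x_def[symmetric] rcomp_pe .
qed

lemma rcomp_0[simp]: "rcomp 0 F = 0"
  by (simp add: rcomp_pe rnum_def)

lemma ev_mult: "TP F \<Longrightarrow> rcomp (x*y) F = rcomp x F * rcomp y F"
proof -
  assume T: "TP F"
  have e: "x * y = to_fract (rnum x * rnum y) / to_fract (rden x * rden y)"
    using rnum_rden[of x] rnum_rden[of y] by (metis times_divide_times_eq to_fract_mult)
  have "rcomp (x*y) F = pe (rnum x * rnum y) F / pe (rden x * rden y) F"
    unfolding e by (rule REP[OF _ T]) simp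
  then show ?thesis by (simp add: pe_mult rcomp_pe)
qed

lemma ev_add: "TP F \<Longrightarrow> rcomp (x+y) F = rcomp x F + rcomp y F"
proof -
  assume T: "TP F"
  have nz: "to_fract (rden x) \<noteq> 0" "to_fract (rden y) \<noteq> 0" by simp_all
  have e: "x + y = to_fract (rnum x * rden y + rnum y * rden x) / to_fract (rden x * rden y)"
    using nz by (subst rnum_rden[of x], subst rnum_rden[of y]) (simp add: field_simps)
  have "rcomp (x+y) F = pe (rnum x * rden y + rnum y * rden x) F / pe (rden x * rden y) F"
    unfolding e by (rule REP[OF _ T]) simp
  moreover have "pe (rden x) F \<noteq> 0" "pe (rden y) F \<noteq> 0" using T unfolding TP_def by auto
  ultimately show ?thesis by (simp add: pe_mult pe_add rcomp_pe field_simps)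
qed

lemma ev_div: "TP F \<Longrightarrow> rcomp (x/y) F = rcomp x F / rcomp y F"
proof (cases "y = 0")
  case False
  assume T: "TP F"
  have nz: "to_fract (rden x) \<noteq> 0" "to_fract (rden y) \<noteq> 0" by simp_all
  have ny: "rnum y \<noteq> 0" using False by (simp add: rnum_def)
  have e: "x / y = to_fract (rnum x * rden y) / to_fract (rden x * rnum y)"
    using nz ny by (subst rnum_rden[of x], subst rnum_rden[of y]) (simp add: field_simps)
  have "rcomp (x/y) F = pe (rnum x * rden y) F / pe (rden x * rnum y) F"
    unfolding e by (rule REP[OF _ T]) (simp add: ny)
  moreover have "pe (rden x) F \<noteq> 0" "pe (rden y) F \<noteq> 0" "pe (rnum y) F \<noteq> 0"
    using T ny unfolding TP_def by auto
  ultimately show ?thesis by (simp add: pe_mult rcomp_pe field_simps)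
qed simp

lemma ev_cst: "TP F \<Longrightarrow> rcomp (cst a) F = cst a"
proof -
  assume T: "TP F"
  have "cst a = to_fract [:a:] / to_fract 1" by (simp add: cst_def)
  then show ?thesis using REP[OF _ T, of 1 "[:a:]"] by simp
qed

lemma ev_X: "TP F \<Longrightarrow> rcomp (to_fract [:0,1:]) F = F"
  using REP[of 1 F "[:0,1:]"] by simp

lemma ev_pe: "TP F \<Longrightarrow> rcomp (pe g P) F = pe g (rcomp P F)"
proof (induct g rule: pCons_induct)
  case 0
  then show ?case by simp
next
  case (pCons a g)
  then show ?case by (simp add: pe_pCons ev_add ev_mult ev_cst)
qed

lemma assoc: "TP F \<Longrightarrow> (rcomp f ^^ j) F = rcomp (riter f j) F"
proof (induct j)
  case 0
  then show ?case by (simp add: riter_def ev_X)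
next
  case (Suc j)
  have "riter f (Suc j) = rcomp f (riter f j)" by (simp add: riter_def)
  then have "rcomp (riter f (Suc j)) F = rcomp f (rcomp (riter f j) F)"
    using Suc by (simp add: rcomp_pe[of f] ev_div ev_pe)
  then show ?case using Suc by simp
qed

lemma riter_add: "TP (riter f k) \<Longrightarrow> riter f (j + k) = rcomp (riter f j) (riter f k)"
  using assoc[where F="riter f k" and f=f and j=j] by (simp add: riter_def funpow_add)

lemma hom_0[simp]: "hom n 0 G H = 0" by (simp add: hom_def)

lemma coprime_nonroot:
  fixes g h :: "'a::field_gcd poly"
  assumes "coprime g h"
  shows "poly g 0 \<noteq> 0 \<or> poly h 0 \<noteq> 0"
proof (rule ccontr)
  assume "\<not> ?thesis"
  then have "[:-0,1:] dvd g" "[:-0,1:] dvd h" by (simp_all add: poly_eq_0_iff_dvd)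
  then have "is_unit [:-0,1::'a:]" using coprime_common_divisor[OF assms] by blast
  then show False by (simp add: is_unit_iff_degree)
qed

lemma rnum_nz: "rdeg F \<ge> 1 \<Longrightarrow> rnum F \<noteq> 0"
proof
  assume "rdeg F \<ge> 1" "rnum F = 0"
  then have "rden F = 1" unfolding rnum_def rden_def using fst_quot_of_fract_0_imp by blast
  then show False using \<open>rdeg F \<ge> 1\<close> \<open>rnum F = 0\<close> by (simp add: rdeg_def)
qed

lemma poly_ext: "degree (p::'a::field poly) \<le> n \<Longrightarrow> poly p t = (\<Sum>i\<le>n. coeff p i * t^i)"
  by (simp add: poly_altdef, intro sum.mono_neutral_left) (auto simp: coeff_eq_0)

lemma max_lemma: "a \<le> X \<Longrightarrow> b \<le> X \<Longrightarrow> a = X \<or> b = X \<Longrightarrow> max a b = (X::nat)"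
  by (auto simp: max_def)

lemma sumD: "i \<le> n \<Longrightarrow> i * D + (n - i) * D = n * (D::nat)"
proof -
  assume "i \<le> n"
  then have e: "i + (n-i) = n" by simp
  have "i*D + (n-i)*D = (i + (n-i))*D" by (simp only: add_mult_distrib)
  then show ?thesis using e by simp
qed

lemma coeff_hom_eq:
  fixes G H :: "'a::field_gcd poly"
  assumes "degree G = D" "degree H = D" "G \<noteq> 0" "H \<noteq> 0" "degree p \<le> n"
  shows "coeff (hom n p G H) (n*D) = lead_coeff H ^ n * poly p (lead_coeff G / lead_coeff H)"
proof -
  have lh: "lead_coeff H \<noteq> 0" using assms(4) by (metis leading_coeff_0_iff)
  have "coeff (hom n p G H) (n*D) = (\<Sum>i\<le>n. coeff p i * (lead_coeff G ^ i * lead_coeff H ^ (n-i)))"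
  proof -
    have "\<And>i. i \<le> n \<Longrightarrow> coeff (G^i * H^(n-i)) (n*D) = lead_coeff G ^ i * lead_coeff H ^ (n-i)"
    proof -
      fix i assume i: "i \<le> n"
      have "degree (G^i * H^(n-i)) = n * D" using deg_prod[OF assms(3,4), of i n] assms(1,2) i sumD[OF i]
        by simp
      then show "coeff (G^i * H^(n-i)) (n*D) = lead_coeff G ^ i * lead_coeff H ^ (n-i)"
        by (metis lead_coeff_mult lead_coeff_power)
    qed
    then show ?thesis unfolding hom_def coeff_sum by (intro sum.cong) auto
  qed
  also have "\<dots> = lead_coeff H ^ n * (\<Sum>i\<le>n. coeff p i * (lead_coeff G / lead_coeff H)^i)"
    unfolding sum_distrib_left
  proof (intro sum.cong refl)
    fix i assume "i \<in> {..n}"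
    then have "lead_coeff H ^ n = lead_coeff H ^ i * lead_coeff H ^ (n-i)" by (simp flip: power_add)
    then show "coeff p i * (lead_coeff G ^ i * lead_coeff H ^ (n-i)) =
      lead_coeff H ^ n * (coeff p i * (lead_coeff G / lead_coeff H)^i)"
      using lh by (simp add: power_divide field_simps)
  qed
  also have "\<dots> = lead_coeff H ^ n * poly p (lead_coeff G / lead_coeff H)"
    using poly_ext[OF assms(5)] by simp
  finally show ?thesis .
qed

lemma deg_hom_le_eq:
  fixes G H :: "'a::field_gcd poly"
  assumes "degree G = D" "degree H = D" "G \<noteq> 0" "H \<noteq> 0"
  shows "degree (hom n p G H) \<le> n*D"
  unfolding hom_def
proof (rule degree_sum_le)
  fix i assume i: "i \<in> {..n}"
  have "degree (G^i * H^(n-i)) = n * D" using deg_prod[OF assms(3,4), of i n] assms(1,2) i sumD[of i n D]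
    by simp
  then show "degree (smult (coeff p i) (G^i * H^(n-i))) \<le> n*D" by simp
qed simp

lemma RDEG0:
  fixes x :: "'a::field_gcd ratfun"
  assumes "coprime G H" "G \<noteq> 0" "H \<noteq> 0"
  shows "max (degree (hom (rdeg x) (rnum x) G H)) (degree (hom (rdeg x) (rden x) G H)) = rdeg x * max (degree G) (degree H)"
proof -
  define n where "n = rdeg x"
  define g where "g = rnum x"
  define h where "h = rden x"
  have hn: "h \<noteq> 0" by (simp add: h_def)
  have dg: "degree g \<le> n" and dh: "degree h \<le> n" by (simp_all add: n_def g_def h_def deg_rnum_le deg_rden_le)
  have nmax: "n = max (degree g) (degree h)" by (simp add: n_def g_def h_def rdeg_def)
  have cgh: "coprime g h" by (simp add: g_def h_def coprime_rnum_rden)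
  have "max (degree (hom n g G H)) (degree (hom n h G H)) = n * max (degree G) (degree H)"
  proof (cases "degree G < degree H")
    case True
    have B: "degree (hom n h G H) = order 0 h * degree G + (n - order 0 h) * degree H"
      using DEG_L[OF hn dh assms(2,3) True] by simp
    have oh: "order 0 h \<le> n" using order_degree[OF hn, of 0] dh by simp
    have Ble: "degree (hom n h G H) \<le> n * degree H"
    proof (cases "order 0 h = 0")
      case False
      then have "0 < order 0 h" by simp
      from helper_L[OF this oh True] show ?thesis using B by simp
    qed (use B in simp)
    have Ale: "degree (hom n g G H) \<le> n * degree H"
    proof (cases "g = 0")
      case False
      have A: "degree (hom n g G H) = order 0 g * degree G + (n - order 0 g) * degree H"
        using DEG_L[OF False dg assms(2,3) True] by simp
      have og: "order 0 g \<le> n" using order_degree[OF False, of 0] dg by simp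
      show ?thesis
      proof (cases "order 0 g = 0")
        case False
        then have "0 < order 0 g" by simp
        from helper_L[OF this og True] show ?thesis using A by simp
      qed (use A in simp)
    qed simp
    have "degree (hom n g G H) = n * degree H \<or> degree (hom n h G H) = n * degree H"
    proof (cases "poly h 0 = 0")
      case False
      then show ?thesis using B order_0I[OF False] by simp
    next
      case True
      then have g0: "poly g 0 \<noteq> 0" using coprime_nonroot[OF cgh] by simp
      then have "g \<noteq> 0" by auto
      then show ?thesis using DEG_L[OF _ dg assms(2,3) \<open>degree G < degree H\<close>] order_0I[OF g0] by simp
    qed
    then show ?thesis using Ale Ble True max_lemma by simp
  next
    case False
    note F = False
    show ?thesis
    proof (cases "degree H < degree G")
      case True
      have B: "degree (hom n h G H) = degree h * degree G + (n - degree h) * degree H"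
        using DEG_G[OF hn dh assms(2,3) True] by simp
      have Ble: "degree (hom n h G H) \<le> n * degree G"
      proof (cases "degree h = n")
        case False
        then have "degree h < n" using dh by simp
        from helper_G[OF this order_refl True] show ?thesis using B by simp
      qed (use B in simp)
      have Ale: "degree (hom n g G H) \<le> n * degree G"
      proof (cases "g = 0")
        case False
        have A: "degree (hom n g G H) = degree g * degree G + (n - degree g) * degree H"
          using DEG_G[OF False dg assms(2,3) True] by simp
        show ?thesis
        proof (cases "degree g = n")
          case False
          then have "degree g < n" using dg by simp
          from helper_G[OF this order_refl True] show ?thesis using A by simp
        qed (use A in simp)
      qed simp
      have "degree (hom n g G H) = n * degree G \<or> degree (hom n h G H) = n * degree G"
      proof (cases "degree h = n")
        case True
        then show ?thesis using B by simp
      next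
        case False
        then have "degree g = n" using nmax by (auto simp: max_def split: if_splits)
        moreover have "g \<noteq> 0"
        proof
          assume "g = 0"
          then have "n = 0" using \<open>degree g = n\<close> by simp
          then show False using False dh by simp
        qed
        ultimately show ?thesis using DEG_G[OF _ dg assms(2,3) \<open>degree H < degree G\<close>] by simp
      qed
      then show ?thesis using Ale Ble True max_lemma by simp
    next
      case False
      then have eqD: "degree G = degree H" using F by simp
      define D where "D = degree H"
      have GD: "degree G = D" using eqD D_def by simp
      have HD: "degree H = D" using D_def by simp
      have Ale: "degree (hom n g G H) \<le> n*D" by (rule deg_hom_le_eq[OF GD HD assms(2,3)])
      have Ble: "degree (hom n h G H) \<le> n*D" by (rule deg_hom_le_eq[OF GD HD assms(2,3)])
      define t where "t = lead_coeff G / lead_coeff H"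
      have lh: "lead_coeff H \<noteq> 0" using assms(3) by (metis leading_coeff_0_iff)
      have "coeff (hom n g G H) (n*D) \<noteq> 0 \<or> coeff (hom n h G H) (n*D) \<noteq> 0"
      proof (rule ccontr)
        assume "\<not> ?thesis"
        then have "poly g t = 0" "poly h t = 0"
          using coeff_hom_eq[OF GD HD assms(2,3) dg] coeff_hom_eq[OF GD HD assms(2,3) dh] lh t_def by auto
        then have "[:-t,1:] dvd g" "[:-t,1:] dvd h" by (simp_all add: poly_eq_0_iff_dvd)
        then have "is_unit [:-t,1:]" using coprime_common_divisor[OF cgh] by blast
        then show False by (simp add: is_unit_iff_degree)
      qed
      then have "degree (hom n g G H) \<ge> n*D \<or> degree (hom n h G H) \<ge> n*D" using le_degree by blast
      then show ?thesis using Ale Ble eqD D_def max_lemma[of _ "n*D"] by auto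
    qed
  qed
  then show ?thesis by (simp add: n_def g_def h_def)
qed

lemma RDEG:
  fixes x F :: "'a::field_gcd ratfun"
  assumes "rdeg F \<ge> 1"
  shows "rdeg (rcomp x F) = rdeg x * rdeg F"
proof -
  obtain c where c: "is_unit c" "hom (rdeg x) (rnum x) (rnum F) (rden F) = rnum (rcomp x F) * c"
          "hom (rdeg x) (rden x) (rnum F) (rden F) = rden (rcomp x F) * c"
    using COMP[OF assms, of x] by blast
  have "rdeg (rcomp x F) = max (degree (hom (rdeg x) (rnum x) (rnum F) (rden F))) (degree (hom (rdeg x) (rden x) (rnum F) (rden F)))"
    using unit_facts(1)[OF c(1) c(2)] unit_facts(1)[OF c(1) c(3)] by (simp add: rdeg_def)
  also have "\<dots> = rdeg x * rdeg F"
    using RDEG0[OF coprime_rnum_rden rnum_nz[OF assms] rden_nz, of x] by (simp add: rdeg_def)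
  finally show ?thesis .
qed

lemma natL: "q \<le> (n::nat) \<Longrightarrow> dG \<le> D \<Longrightarrow> n*D - (q*dG + (n-q)*D) = q*(D - dG)"
proof -
  assume a: "q \<le> n" "dG \<le> D"
  obtain r where r: "n = q + r" using a(1) le_iff_add by blast
  obtain e where e: "D = dG + e" using a(2) le_iff_add by blast
  show ?thesis using r e by (simp add: algebra_simps)
qed

lemma natG: "t \<le> (n::nat) \<Longrightarrow> dH \<le> D \<Longrightarrow> n*D - (t*D + (n-t)*dH) = (n-t)*(D - dH)"
proof -
  assume a: "t \<le> n" "dH \<le> D"
  obtain r where r: "n = t + r" using a(1) le_iff_add by blast
  obtain e where e: "D = dH + e" using a(2) le_iff_add by blast
  show ?thesis using r e by (simp add: algebra_simps)
qed

lemma riter_0: "rnum (riter f 0) = [:0,1:]" "rden (riter f 0) = 1"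
  by (simp_all add: riter_def rnum_def rden_def)

lemma rdeg_iter: "rdeg f \<ge> 1 \<Longrightarrow> rdeg (riter f k) = rdeg f ^ k"
proof (induct k)
  case 0
  then show ?case by (simp add: rdeg_def riter_0)
next
  case (Suc k)
  have "rdeg (riter f k) \<ge> 1" using Suc by simp
  then have "rdeg (rcomp f (riter f k)) = rdeg f * rdeg (riter f k)" by (rule RDEG)
  then show ?case using Suc by (simp add: riter_def)
qed

locale itf =
  fixes f :: "'a::field_gcd ratfun"
  assumes d1: "rdeg f \<ge> 1"
begin

abbreviation "d \<equiv> rdeg f"
abbreviation "G k \<equiv> gk f k"
abbreviation "H k \<equiv> hk f k"

lemma rdeg_k: "rdeg (riter f k) \<ge> 1"
  using rdeg_iter[OF d1, of k] d1 by simp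

lemma maxk: "max (degree (G k)) (degree (H k)) = d^k"
  using rdeg_iter[OF d1, of k] by (simp add: rdeg_def gk_def hk_def)

lemma Gnz: "G k \<noteq> 0" using rnum_nz[OF rdeg_k] by (simp add: gk_def)
lemma Hnz: "H k \<noteq> 0" by (simp add: hk_def)
lemma copk: "coprime (G k) (H k)" by (simp add: gk_def hk_def coprime_rnum_rden)
lemma degG_le: "degree (G k) \<le> d^k" using maxk[of k] by linarith
lemma degH_le: "degree (H k) \<le> d^k" using maxk[of k] by linarith

lemma compose:
  "\<exists>c. is_unit c \<and> hom (d^j) (G j) (G k) (H k) = G (j+k) * c \<and> hom (d^j) (H j) (G k) (H k) = H (j+k) * c"
proof -
  have e: "riter f (j+k) = rcomp (riter f j) (riter f k)" by (rule riter_add[OF TP_of[OF rdeg_k]])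
  show ?thesis using COMP[OF rdeg_k, of "riter f j" k] rdeg_iter[OF d1, of j]
    unfolding gk_def hk_def e by simp
qed

lemma CL:
  assumes "degree (G k) < degree (H k)"
  shows "d^(j+k) - degree (G (j+k)) = order 0 (G j) * (d^k - degree (G k)) \<and>
         d^(j+k) - degree (H (j+k)) = order 0 (H j) * (d^k - degree (G k))"
proof -
  obtain c where c: "is_unit c" "hom (d^j) (G j) (G k) (H k) = G (j+k) * c"
     "hom (d^j) (H j) (G k) (H k) = H (j+k) * c" using compose by blast
  have hk: "degree (H k) = d^k" using maxk[of k] assms by simp
  have 1: "degree (G (j+k)) = order 0 (G j) * degree (G k) + (d^j - order 0 (G j)) * d^k"
    using DEG_L[OF Gnz degG_le Gnz Hnz assms] unit_facts(1)[OF c(1) c(2)] hk by simp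
  have 2: "degree (H (j+k)) = order 0 (H j) * degree (G k) + (d^j - order 0 (H j)) * d^k"
    using DEG_L[OF Hnz degH_le Gnz Hnz assms] unit_facts(1)[OF c(1) c(3)] hk by simp
  have o1: "order 0 (G j) \<le> d^j" using order_degree[OF Gnz, of 0 j] degG_le[of j] by simp
  have o2: "order 0 (H j) \<le> d^j" using order_degree[OF Hnz, of 0 j] degH_le[of j] by simp
  have dk: "degree (G k) \<le> d^k" by (rule degG_le)
  show ?thesis unfolding 1 2 power_add using natL[OF o1 dk] natL[OF o2 dk] by simp
qed

lemma CG:
  assumes "degree (H k) < degree (G k)"
  shows "d^(j+k) - degree (G (j+k)) = (d^j - degree (G j)) * (d^k - degree (H k)) \<and>
         d^(j+k) - degree (H (j+k)) = (d^j - degree (H j)) * (d^k - degree (H k))"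
proof -
  obtain c where c: "is_unit c" "hom (d^j) (G j) (G k) (H k) = G (j+k) * c"
     "hom (d^j) (H j) (G k) (H k) = H (j+k) * c" using compose by blast
  have gk: "degree (G k) = d^k" using maxk[of k] assms by simp
  have 1: "degree (G (j+k)) = degree (G j) * d^k + (d^j - degree (G j)) * degree (H k)"
    using DEG_G[OF Gnz degG_le Gnz Hnz assms] unit_facts(1)[OF c(1) c(2)] gk by simp
  have 2: "degree (H (j+k)) = degree (H j) * d^k + (d^j - degree (H j)) * degree (H k)"
    using DEG_G[OF Hnz degH_le Gnz Hnz assms] unit_facts(1)[OF c(1) c(3)] gk by simp
  have dk: "degree (H k) \<le> d^k" by (rule degH_le)
  show ?thesis unfolding 1 2 power_add
    using natG[OF degG_le dk, of j] natG[OF degH_le dk, of j] by (simp add: mult.commute)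
qed

lemma CO1:
  assumes "poly (G k) 0 = 0"
  shows "order 0 (G (j+k)) = order 0 (G j) * order 0 (G k) \<and>
         order 0 (H (j+k)) = order 0 (H j) * order 0 (G k)"
proof -
  obtain c where c: "is_unit c" "hom (d^j) (G j) (G k) (H k) = G (j+k) * c"
     "hom (d^j) (H j) (G k) (H k) = H (j+k) * c" using compose by blast
  have h0: "poly (H k) 0 \<noteq> 0" using coprime_nonroot[OF copk[of k]] assms by simp
  show ?thesis
    using ORD1[OF Gnz degG_le Gnz Hnz assms h0] ORD1[OF Hnz degH_le Gnz Hnz assms h0]
      unit_facts(3)[OF c(1) c(2)] unit_facts(3)[OF c(1) c(3)] by simp
qed

lemma CO2:
  assumes "poly (H k) 0 = 0"
  shows "order 0 (G (j+k)) = (d^j - degree (G j)) * order 0 (H k) \<and>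
         order 0 (H (j+k)) = (d^j - degree (H j)) * order 0 (H k)"
proof -
  obtain c where c: "is_unit c" "hom (d^j) (G j) (G k) (H k) = G (j+k) * c"
     "hom (d^j) (H j) (G k) (H k) = H (j+k) * c" using compose by blast
  have g0: "poly (G k) 0 \<noteq> 0" using coprime_nonroot[OF copk[of k]] assms by simp
  show ?thesis
    using ORD2[OF Gnz degG_le Gnz Hnz assms g0] ORD2[OF Hnz degH_le Gnz Hnz assms g0]
      unit_facts(3)[OF c(1) c(2)] unit_facts(3)[OF c(1) c(3)] by simp
qed

lemma root_iff_S: "poly (G k) 0 = 0 \<longleftrightarrow> 0 < order 0 (G k)"
  using order_gt_0_iff[OF Gnz] by simp
lemma root_iff_T: "poly (H k) 0 = 0 \<longleftrightarrow> 0 < order 0 (H k)"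
  using order_gt_0_iff[OF Hnz] by simp

lemma base: "degree (G 0) = 1" "degree (H 0) = 0" "order 0 (G 0) = 1" "order 0 (H 0) = 0"
  by (simp_all add: gk_def hk_def riter_0 order_power_n_n[of 0 1, simplified])

lemma ST0: "order 0 (G k) = 0 \<or> order 0 (H k) = 0"
proof (cases "poly (G k) 0 = 0")
  case True
  then have "poly (H k) 0 \<noteq> 0" using coprime_nonroot[OF copk[of k]] by simp
  then show ?thesis by (simp add: order_0I)
next
  case False
  then show ?thesis by (simp add: order_0I)
qed

end


lemma lp_fin: "least_pos P = enat m \<Longrightarrow> 0 < m \<and> P m \<and> (\<forall>k. 0 < k \<longrightarrow> k < m \<longrightarrow> \<not> P k)"
proof -
  assume a: "least_pos P = enat m"
  then have ex: "\<exists>k>0. P k" unfolding least_pos_def by (auto split: if_splits)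
  then have m: "m = (LEAST k. 0 < k \<and> P k)" using a unfolding least_pos_def by simp
  have "0 < m \<and> P m" unfolding m using ex by (metis (mono_tags, lifting) LeastI)
  moreover have "\<forall>k. 0 < k \<longrightarrow> k < m \<longrightarrow> \<not> P k" unfolding m using not_less_Least by blast
  ultimately show ?thesis by blast
qed

lemma lp_inf: "least_pos P = \<infinity> \<Longrightarrow> 0 < k \<Longrightarrow> \<not> P k"
proof
  assume a: "least_pos P = \<infinity>" "0 < k" "P k"
  then have "\<exists>k>0. P k" by blast
  then show False using a(1) unfolding least_pos_def by simp
qed

lemma lp_below: "0 < k \<Longrightarrow> enat k < least_pos P \<Longrightarrow> \<not> P k"
proof -
  assume k: "0 < k" "enat k < least_pos P"
  show "\<not> P k"
  proof (cases "least_pos P")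
    case (enat m)
    then show ?thesis using lp_fin[OF enat] k by auto
  next
    case infinity
    then show ?thesis using lp_inf k by auto
  qed
qed

lemma lp_eq: "0 < m \<Longrightarrow> P m \<Longrightarrow> (\<forall>k. 0 < k \<longrightarrow> k < m \<longrightarrow> \<not> P k) \<Longrightarrow> least_pos P = enat m"
proof -
  assume a: "0 < m" "P m" "\<forall>k. 0 < k \<longrightarrow> k < m \<longrightarrow> \<not> P k"
  have "(LEAST k. 0 < k \<and> P k) = m"
    by (rule Least_equality) (use a in \<open>auto simp: not_less[symmetric]\<close>)
  then show ?thesis unfolding least_pos_def using a by auto
qed

locale absit =
  fixes d :: nat and dg dh S T :: "nat \<Rightarrow> nat"
  assumes d1: "d \<ge> 1"
  and mx: "\<And>k. max (dg k) (dh k) = d^k"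
  and b: "dg 0 = 1" "dh 0 = 0" "S 0 = 1" "T 0 = 0"
  and ST: "\<And>k. S k = 0 \<or> T k = 0"
  and CL: "\<And>j k. dg k < dh k \<Longrightarrow> d^(j+k) - dg(j+k) = S j * (d^k - dg k) \<and> d^(j+k) - dh(j+k) = T j * (d^k - dg k)"
  and CG: "\<And>j k. dh k < dg k \<Longrightarrow> d^(j+k) - dg(j+k) = (d^j - dg j) * (d^k - dh k) \<and> d^(j+k) - dh(j+k) = (d^j - dh j)*(d^k - dh k)"
  and CO1: "\<And>j k. 0 < S k \<Longrightarrow> S(j+k) = S j * S k \<and> T(j+k) = T j * S k"
  and CO2: "\<And>j k. 0 < T k \<Longrightarrow> S(j+k) = (d^j - dg j) * T k \<and> T(j+k) = (d^j - dh j) * T k"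
begin

definition "mu = least_pos (\<lambda>k. dg k < dh k)"
definition "nu = least_pos (\<lambda>k. dg k > dh k)"
definition "ee = least_pos (\<lambda>k. 0 < S k)"
definition "eps = least_pos (\<lambda>k. 0 < T k)"
definition "del = (let m = the_enat (min mu nu) in nat \<bar>int (dg m) - int (dh m)\<bar>)"

lemma leg: "dg k \<le> d^k" using mx[of k] by linarith
lemma leh: "dh k \<le> d^k" using mx[of k] by linarith

lemma eqdeg: "\<not> dg k < dh k \<Longrightarrow> \<not> dh k < dg k \<Longrightarrow> dg k = d^k \<and> dh k = d^k"
  using mx[of k] by (auto simp: max_def)
lemma lessG: "dg k < dh k \<Longrightarrow> dh k = d^k" using mx[of k] by (auto simp: max_def)
lemma lessH: "dh k < dg k \<Longrightarrow> dg k = d^k" using mx[of k] by (auto simp: max_def)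

lemma defg0: "d^k - dg k = 0 \<Longrightarrow> dg k = d^k" using leg[of k] by simp
lemma defh0: "d^k - dh k = 0 \<Longrightarrow> dh k = d^k" using leh[of k] by simp
lemma defg_int: "d^k - dg k = x \<Longrightarrow> int (dg k) = int (d^k) - int x" using leg[of k] by auto
lemma defh_int: "d^k - dh k = x \<Longrightarrow> int (dh k) = int (d^k) - int x" using leh[of k] by auto

lemma part1:
  assumes "nu < mu"
  shows "let \<nu> = the_enat nu in
        (\<forall>i\<ge>1. dg (i * \<nu>) = d ^ (i * \<nu>) \<and> int (dh (i * \<nu>)) = int (d ^ (i * \<nu>)) - int (del ^ i)) \<and>
        (\<forall>k\<ge>1. \<not> \<nu> dvd k \<longrightarrow> dg k = d ^ k \<and> dh k = d ^ k)"
proof -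
  obtain n where n: "nu = enat n" using assms by (cases nu) auto
  have nf: "0 < n" "dh n < dg n" "\<forall>k. 0 < k \<longrightarrow> k < n \<longrightarrow> \<not> dh k < dg k"
    using lp_fin[OF n[unfolded nu_def]] by auto
  have below: "dg k = d^k \<and> dh k = d^k" if "0 < k" "k < n" for k
  proof -
    have "enat k < mu" using that n assms by (metis enat_ord_simps(2) order.strict_trans)
    then have "\<not> dg k < dh k" using lp_below[OF that(1)] unfolding mu_def by blast
    then show ?thesis using eqdeg nf(3) that by blast
  qed
  have gn: "dg n = d^n" using lessH[OF nf(2)] .
  define \<delta> where "\<delta> = d^n - dh n"
  have mn: "min mu nu = enat n" using min.absorb2[OF less_imp_le[OF assms]] n by simp
  have dd: "nat \<bar>int (dg n) - int (dh n)\<bar> = dg n - dh n" using nf(2) by arith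
  have "del = nat \<bar>int (dg n) - int (dh n)\<bar>" by (simp only: del_def mn Let_def the_enat.simps)
  from this dd have "del = dg n - dh n" by (rule trans)
  then have del: "del = \<delta>" using gn \<delta>_def by simp
  have Q: "d^(i*n + r) - dg (i*n+r) = 0 \<and> d^(i*n+r) - dh (i*n+r) = \<delta>^i * (d^r - dh r)" if "r < n" for i r
  proof (induct i)
    case 0
    show ?case
    proof (cases "r = 0")
      case True
      then show ?thesis using b by simp
    next
      case False
      then show ?thesis using below[of r] that by simp
    qed
  next
    case (Suc i)
    have e: "Suc i * n + r = (i*n + r) + n" by simp
    show ?case unfolding e using CG[OF nf(2), of "i*n+r"] Suc gn \<delta>_def by simp
  qed
  have P1: "\<forall>i\<ge>1. dg (i * n) = d ^ (i * n) \<and> int (dh (i * n)) = int (d ^ (i * n)) - int (del ^ i)"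
  proof (intro allI impI)
    fix i :: nat assume "i \<ge> 1"
    have "d^(i*n + 0) - dg (i*n+0) = 0 \<and> d^(i*n+0) - dh (i*n+0) = \<delta>^i * (d^0 - dh 0)" using Q nf(1) by blast
    then show "dg (i * n) = d ^ (i * n) \<and> int (dh (i * n)) = int (d ^ (i * n)) - int (del ^ i)"
      using defg0 defh_int b del by simp
  qed
  have P2: "\<forall>k\<ge>1. \<not> n dvd k \<longrightarrow> dg k = d ^ k \<and> dh k = d ^ k"
  proof (intro allI impI)
    fix k :: nat assume k: "k \<ge> 1" "\<not> n dvd k"
    define r where "r = k mod n"
    define i where "i = k div n"
    have kr: "k = i*n + r" by (simp add: r_def i_def)
    have r: "0 < r" "r < n" using k nf(1) by (auto simp: r_def mod_greater_zero_iff_not_dvd)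
    have "d^(i*n + r) - dg (i*n+r) = 0 \<and> d^(i*n+r) - dh (i*n+r) = \<delta>^i * (d^r - dh r)" using Q r(2) by blast
    moreover have "d^r - dh r = 0" using below[OF r] by simp
    ultimately show "dg k = d ^ k \<and> dh k = d ^ k" using defg0 defh0 kr by simp
  qed
  show ?thesis using P1 P2 n by simp
qed

lemma musetup:
  assumes "mu < nu"
  shows "\<exists>m. mu = enat m \<and> 0 < m \<and> dg m < dh m \<and> (\<forall>k. 0 < k \<longrightarrow> k < m \<longrightarrow> dg k = d^k \<and> dh k = d^k)
     \<and> del = d^m - dg m \<and> del \<ge> 1 \<and> (\<forall>j. d^(j+m) - dg(j+m) = S j * del \<and> d^(j+m) - dh(j+m) = T j * del)"
proof -
  obtain m where m: "mu = enat m" using assms by (cases mu) auto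
  have mf: "0 < m" "dg m < dh m" "\<forall>k. 0 < k \<longrightarrow> k < m \<longrightarrow> \<not> dg k < dh k"
    using lp_fin[OF m[unfolded mu_def]] by auto
  have below: "dg k = d^k \<and> dh k = d^k" if "0 < k" "k < m" for k
  proof -
    have "enat k < nu" using that m assms by (metis enat_ord_simps(2) order.strict_trans)
    then have "\<not> dh k < dg k" using lp_below[OF that(1)] unfolding nu_def by blast
    then show ?thesis using eqdeg mf(3) that by blast
  qed
  have hm: "dh m = d^m" using lessG[OF mf(2)] .
  have mn: "min mu nu = enat m" using min.absorb1[OF less_imp_le[OF assms]] m by simp
  have dd: "nat \<bar>int (dg m) - int (dh m)\<bar> = dh m - dg m" using mf(2) by arith
  have "del = nat \<bar>int (dg m) - int (dh m)\<bar>" by (simp only: del_def mn Let_def the_enat.simps)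
  from this dd have "del = dh m - dg m" by (rule trans)
  then have del: "del = d^m - dg m" using hm by simp
  have "\<forall>j. d^(j+m) - dg(j+m) = S j * del \<and> d^(j+m) - dh(j+m) = T j * del"
    using CL[OF mf(2)] del by simp
  moreover have "del \<ge> 1" using del mf(2) hm by simp
  ultimately show ?thesis using m mf below del by blast
qed

lemma part2:
  assumes "mu < nu" "eps = \<infinity>" "ee = \<infinity>"
  shows "\<forall>k\<ge>1. enat k \<noteq> mu \<longrightarrow> dg k = d ^ k \<and> dh k = d ^ k"
proof (intro allI impI)
  fix k :: nat assume k: "k \<ge> 1" "enat k \<noteq> mu"
  obtain m where m: "mu = enat m" "0 < m" "\<forall>k. 0 < k \<longrightarrow> k < m \<longrightarrow> dg k = d^k \<and> dh k = d^k"
    "\<forall>j. d^(j+m) - dg(j+m) = S j * del \<and> d^(j+m) - dh(j+m) = T j * del"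
    using musetup[OF assms(1)] by blast
  show "dg k = d ^ k \<and> dh k = d ^ k"
  proof (cases "k < m")
    case True
    then show ?thesis using m(3) k by simp
  next
    case False
    then have km: "k > m" using k m(1) by auto
    define j where "j = k - m"
    have j: "0 < j" "k = j + m" using km by (auto simp: j_def)
    have "S j = 0" using lp_inf[OF assms(3)[unfolded ee_def] j(1)] by simp
    moreover have "T j = 0" using lp_inf[OF assms(2)[unfolded eps_def] j(1)] by simp
    moreover have "d^(j+m) - dg(j+m) = S j * del \<and> d^(j+m) - dh(j+m) = T j * del" using m(4) by blast
    ultimately show ?thesis using j(2) defg0[of "j+m"] defh0[of "j+m"] by simp
  qed
qed

lemma part3:
  assumes "mu < nu" "ee < eps"
  shows "let \<mu> = the_enat mu; e = the_enat ee; S' = S e in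
        (\<forall>i. int (dg (i * e + \<mu>)) = int (d ^ (i * e + \<mu>)) - int (del * S' ^ i) \<and>
             dh (i * e + \<mu>) = d ^ (i * e + \<mu>)) \<and>
        (\<forall>k\<ge>1. (\<nexists>i. k = i * e + \<mu>) \<longrightarrow> dg k = d ^ k \<and> dh k = d ^ k)"
proof -
  obtain m where m: "mu = enat m" "0 < m" "\<forall>k. 0 < k \<longrightarrow> k < m \<longrightarrow> dg k = d^k \<and> dh k = d^k"
    "\<forall>j. d^(j+m) - dg(j+m) = S j * del \<and> d^(j+m) - dh(j+m) = T j * del"
    using musetup[OF assms(1)] by blast
  obtain p where p: "ee = enat p" using assms(2) by (cases ee) auto
  have pf: "0 < p" "0 < S p" "\<forall>k. 0 < k \<longrightarrow> k < p \<longrightarrow> \<not> 0 < S k"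
    using lp_fin[OF p[unfolded ee_def]] by auto
  have T0: "T k = 0" if "k \<le> p" for k
  proof (cases "k = 0")
    case False
    have "enat k < eps" using that p assms(2) by (metis enat_ord_simps(1) le_less_trans)
    then show ?thesis using lp_below[of k "\<lambda>k. 0 < T k"] False unfolding eps_def by simp
  qed (simp add: b)
  define \<sigma> where "\<sigma> = S p"
  have Q: "S (i*p + r) = \<sigma>^i * S r \<and> T (i*p + r) = \<sigma>^i * T r" for i r
  proof (induct i)
    case 0
    then show ?case by simp
  next
    case (Suc i)
    have e: "Suc i * p + r = (i*p + r) + p" by simp
    show ?case unfolding e using CO1[OF pf(2), of "i*p+r"] Suc \<sigma>_def by (simp add: mult_ac)
  qed
  have Sr: "S r = 0" "T r = 0" if "0 < r" "r < p" for r
    using pf(3) that T0[of r] by auto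
  have P1: "\<forall>i. int (dg (i * p + m)) = int (d ^ (i * p + m)) - int (del * \<sigma> ^ i) \<and>
             dh (i * p + m) = d ^ (i * p + m)"
  proof
    fix i
    have "S (i*p) = \<sigma>^i" "T (i*p) = 0" using Q[of i 0] b by simp_all
    moreover have "d^(i*p+m) - dg(i*p+m) = S (i*p) * del \<and> d^(i*p+m) - dh(i*p+m) = T (i*p) * del"
      using m(4) by blast
    ultimately show "int (dg (i * p + m)) = int (d ^ (i * p + m)) - int (del * \<sigma> ^ i) \<and>
             dh (i * p + m) = d ^ (i * p + m)"
      using defg_int[of "i*p+m"] defh0[of "i*p+m"] by (simp add: mult.commute)
  qed
  have P2: "\<forall>k\<ge>1. (\<nexists>i. k = i * p + m) \<longrightarrow> dg k = d ^ k \<and> dh k = d ^ k"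
  proof (intro allI impI)
    fix k :: nat assume k: "k \<ge> 1" "\<nexists>i. k = i * p + m"
    show "dg k = d ^ k \<and> dh k = d ^ k"
    proof (cases "k < m")
      case True
      then show ?thesis using m(3) k by simp
    next
      case False
      then have km: "k \<ge> m" by simp
      define j where "j = k - m"
      have jk: "k = j + m" using km by (simp add: j_def)
      define r where "r = j mod p"
      define i where "i = j div p"
      have jr: "j = i*p + r" by (simp add: r_def i_def)
      have r: "0 < r" "r < p"
      proof -
        show "r < p" using pf(1) by (simp add: r_def)
        show "0 < r"
        proof (rule ccontr)
          assume "\<not> 0 < r"
          then have "k = i*p + m" using jk jr by simp
          then show False using k(2) by blast
        qed
      qed
      have "S j = 0" "T j = 0" using Q[of i r] jr Sr[OF r] by simp_all
      moreover have "d^(j+m) - dg(j+m) = S j * del \<and> d^(j+m) - dh(j+m) = T j * del"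
        using m(4) by blast
      ultimately show ?thesis using jk defg0[of "j+m"] defh0[of "j+m"] by simp
    qed
  qed
  show ?thesis using P1 P2 m(1) p \<sigma>_def by simp
qed

lemma part4:
  assumes "mu < nu" "eps < \<infinity>"
  shows "ee = eps + mu \<and>
      (let \<mu> = the_enat mu; \<epsilon> = the_enat eps; e = the_enat ee;
           T' = T \<epsilon>; \<delta> = del in
        (\<forall>k\<ge>1. int (dg (\<mu> + k)) = int (d ^ (\<mu> + k)) - int (\<delta> * S k) \<and>
                int (dh (\<mu> + k)) = int (d ^ (\<mu> + k)) - int (\<delta> * T k)) \<and>
        (\<forall>i\<ge>1. S (i * e) = \<delta> ^ i * T' ^ i \<and> T (i * e) = 0) \<and>
        (\<forall>i. T (i * e + \<epsilon>) = \<delta> ^ i * T' ^ (i + 1) \<and> S (i * e + \<epsilon>) = 0) \<and>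
        (\<forall>k\<ge>1. (\<nexists>i. i \<ge> 1 \<and> k = i * e) \<longrightarrow> (\<nexists>i. k = i * e + \<epsilon>) \<longrightarrow>
                S k = 0 \<and> T k = 0))"
proof -
  obtain m where m: "mu = enat m" "0 < m" "\<forall>k. 0 < k \<longrightarrow> k < m \<longrightarrow> dg k = d^k \<and> dh k = d^k"
    "del \<ge> 1" "\<forall>j. d^(j+m) - dg(j+m) = S j * del \<and> d^(j+m) - dh(j+m) = T j * del"
    using musetup[OF assms(1)] by blast
  obtain q where q: "eps = enat q" using assms(2) by (cases eps) auto
  have qf: "0 < q" "0 < T q" "\<forall>k. 0 < k \<longrightarrow> k < q \<longrightarrow> \<not> 0 < T k"
    using lp_fin[OF q[unfolded eps_def]] by auto
  define \<tau> where "\<tau> = T q"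
  define \<delta> where "\<delta> = del"
  define E where "E = q + m"
  define c where "c = \<delta> * \<tau>"
  have c0: "0 < c" using m(4) qf(2) by (simp add: c_def \<delta>_def \<tau>_def)
  have Sbq: "S k = 0" if "0 < k" "k < q" for k
  proof (rule ccontr)
    assume "S k \<noteq> 0"
    then have "0 < S k" by simp
    from CO1[OF this, of "q - k"] have "T q = T (q-k) * S k" using that by simp
    then have "0 < T (q-k)" using qf(2) by (cases "T (q-k)") auto
    then show False using qf(3) that by auto
  qed
  have Tbq: "T k = 0" if "0 < k" "k < q" for k using qf(3) that by auto
  have Sq: "S q = 0" using ST[of q] qf(2) by auto
  have C2: "S (j+q) = (d^j - dg j) * \<tau> \<and> T (j+q) = (d^j - dh j) * \<tau>" for j
    using CO2[OF qf(2)] \<tau>_def by simp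
  have step: "S (l + E) = c * S l \<and> T (l + E) = c * T l" for l
  proof -
    have e: "l + E = (l + m) + q" by (simp add: E_def)
    have "d^(l+m) - dg(l+m) = S l * del \<and> d^(l+m) - dh(l+m) = T l * del" using m(5) by blast
    then show ?thesis unfolding e using C2[of "l+m"] by (simp add: c_def \<delta>_def mult_ac)
  qed
  have Q: "S (i*E + r) = c^i * S r \<and> T (i*E + r) = c^i * T r" for i r
  proof (induct i)
    case 0
    then show ?case by simp
  next
    case (Suc i)
    have e: "Suc i * E + r = (i*E + r) + E" by simp
    show ?case unfolding e using step[of "i*E+r"] Suc by simp
  qed
  have tab: "S r = 0 \<and> T r = 0" if "0 < r" "r < E" "r \<noteq> q" for r
  proof (cases "r < q")
    case True
    then show ?thesis using Sbq Tbq that by simp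
  next
    case False
    then have "r > q" using that by simp
    define j where "j = r - q"
    have j: "0 < j" "j < m" "r = j + q" using \<open>r > q\<close> that by (auto simp: j_def E_def)
    have "dg j = d^j" "dh j = d^j" using m(3) j by auto
    then show ?thesis using C2[of j] j(3) by simp
  qed
  have qE: "q < E" using m(2) by (simp add: E_def)
  have ee: "ee = enat E"
    unfolding ee_def
  proof (rule lp_eq)
    show "0 < E" using qE by simp
    show "0 < S E" using step[of 0] b c0 by simp
    show "\<forall>k. 0 < k \<longrightarrow> k < E \<longrightarrow> \<not> 0 < S k"
    proof (intro allI impI)
      fix k assume k: "0 < k" "k < E"
      show "\<not> 0 < S k"
      proof (cases "k = q")
        case True
        then show ?thesis using Sq by simp
      qed (use tab k in simp)
    qed
  qed
  have A: "ee = eps + mu" using ee q m(1) by (simp add: E_def)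
  have P1: "\<forall>k\<ge>1. int (dg (m + k)) = int (d ^ (m + k)) - int (\<delta> * S k) \<and>
                int (dh (m + k)) = int (d ^ (m + k)) - int (\<delta> * T k)"
  proof (intro allI impI)
    fix k :: nat
    have "d^(k+m) - dg(k+m) = S k * del \<and> d^(k+m) - dh(k+m) = T k * del" using m(5) by blast
    then have "d^(m+k) - dg(m+k) = \<delta> * S k \<and> d^(m+k) - dh(m+k) = \<delta> * T k"
      by (simp add: add.commute mult.commute \<delta>_def)
    then show "int (dg (m + k)) = int (d ^ (m + k)) - int (\<delta> * S k) \<and>
                int (dh (m + k)) = int (d ^ (m + k)) - int (\<delta> * T k)"
      using defg_int[of "m+k"] defh_int[of "m+k"] by blast
  qed
  have P2: "\<forall>i\<ge>1. S (i * E) = \<delta> ^ i * \<tau> ^ i \<and> T (i * E) = 0"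
    using Q[of _ 0] b by (simp add: c_def power_mult_distrib)
  have P3: "\<forall>i. T (i * E + q) = \<delta> ^ i * \<tau> ^ (i + 1) \<and> S (i * E + q) = 0"
    using Q[of _ q] Sq by (simp add: c_def power_mult_distrib \<tau>_def)
  have P4: "\<forall>k\<ge>1. (\<nexists>i. i \<ge> 1 \<and> k = i * E) \<longrightarrow> (\<nexists>i. k = i * E + q) \<longrightarrow> S k = 0 \<and> T k = 0"
  proof (intro allI impI)
    fix k :: nat assume k: "k \<ge> 1" "\<nexists>i. i \<ge> 1 \<and> k = i * E" "\<nexists>i. k = i * E + q"
    define r where "r = k mod E"
    define i where "i = k div E"
    have kr: "k = i*E + r" by (simp add: r_def i_def)
    have rE: "r < E" using qE by (simp add: r_def)
    have r0: "r \<noteq> 0"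
    proof
      assume "r = 0"
      then have "k = i * E" using kr by simp
      moreover have "i \<ge> 1" using \<open>k = i * E\<close> k(1) by (cases i) auto
      ultimately show False using k(2) by blast
    qed
    have rq: "r \<noteq> q" using k(3) kr by blast
    have "S r = 0 \<and> T r = 0" using tab[OF _ rE rq] r0 by simp
    then show "S k = 0 \<and> T k = 0" using Q[of i r] kr by simp
  qed
  show ?thesis using A P1 P2 P3 P4 m(1) q ee \<tau>_def \<delta>_def by (simp add: E_def)
qed

lemma main_abs:
  shows "(nu < mu \<longrightarrow>
      (let \<nu> = the_enat nu in
        (\<forall>i\<ge>1. dg (i * \<nu>) = d ^ (i * \<nu>) \<and>
                int (dh (i * \<nu>)) = int (d ^ (i * \<nu>)) - int (del ^ i)) \<and>
        (\<forall>k\<ge>1. \<not> \<nu> dvd k \<longrightarrow> dg k = d ^ k \<and> dh k = d ^ k)))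
    \<and>
    (mu < nu \<and> eps = \<infinity> \<and> ee = \<infinity> \<longrightarrow>
      (\<forall>k\<ge>1. enat k \<noteq> mu \<longrightarrow> dg k = d ^ k \<and> dh k = d ^ k))
    \<and>
    (mu < nu \<and> ee < eps \<longrightarrow>
      (let \<mu> = the_enat mu; e = the_enat ee; S' = S e in
        (\<forall>i. int (dg (i * e + \<mu>)) = int (d ^ (i * e + \<mu>)) - int (del * S' ^ i) \<and>
             dh (i * e + \<mu>) = d ^ (i * e + \<mu>)) \<and>
        (\<forall>k\<ge>1. (\<nexists>i. k = i * e + \<mu>) \<longrightarrow> dg k = d ^ k \<and> dh k = d ^ k)))
    \<and>
    (mu < nu \<and> eps < \<infinity> \<longrightarrow>
      ee = eps + mu \<and>
      (let \<mu> = the_enat mu; \<epsilon> = the_enat eps; e = the_enat ee;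
           T' = T \<epsilon>; \<delta> = del in
        (\<forall>k\<ge>1. int (dg (\<mu> + k)) = int (d ^ (\<mu> + k)) - int (\<delta> * S k) \<and>
                int (dh (\<mu> + k)) = int (d ^ (\<mu> + k)) - int (\<delta> * T k)) \<and>
        (\<forall>i\<ge>1. S (i * e) = \<delta> ^ i * T' ^ i \<and> T (i * e) = 0) \<and>
        (\<forall>i. T (i * e + \<epsilon>) = \<delta> ^ i * T' ^ (i + 1) \<and> S (i * e + \<epsilon>) = 0) \<and>
        (\<forall>k\<ge>1. (\<nexists>i. i \<ge> 1 \<and> k = i * e) \<longrightarrow> (\<nexists>i. k = i * e + \<epsilon>) \<longrightarrow>
                S k = 0 \<and> T k = 0)))"
  using part1 part2 part3 part4 by blast

end

theorem lemma7:
  fixes f :: "'a::field_gcd ratfun"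
  assumes "rdeg f \<ge> 1"
  defines "d \<equiv> rdeg f"
  shows
   "(nu_idx f < mu_idx f \<longrightarrow>
      (let \<nu> = the_enat (nu_idx f) in
        (\<forall>i\<ge>1. degree (gk f (i * \<nu>)) = d ^ (i * \<nu>) \<and>
                int (degree (hk f (i * \<nu>))) = int (d ^ (i * \<nu>)) - int (delta f ^ i)) \<and>
        (\<forall>k\<ge>1. \<not> \<nu> dvd k \<longrightarrow> degree (gk f k) = d ^ k \<and> degree (hk f k) = d ^ k)))
    \<and>
    (mu_idx f < nu_idx f \<and> eps_idx f = \<infinity> \<and> e_idx f = \<infinity> \<longrightarrow>
      (\<forall>k\<ge>1. enat k \<noteq> mu_idx f \<longrightarrow> degree (gk f k) = d ^ k \<and> degree (hk f k) = d ^ k))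
    \<and>
    (mu_idx f < nu_idx f \<and> e_idx f < eps_idx f \<longrightarrow>
      (let \<mu> = the_enat (mu_idx f); e = the_enat (e_idx f); S = Sk f e in
        (\<forall>i. int (degree (gk f (i * e + \<mu>))) = int (d ^ (i * e + \<mu>)) - int (delta f * S ^ i) \<and>
             degree (hk f (i * e + \<mu>)) = d ^ (i * e + \<mu>)) \<and>
        (\<forall>k\<ge>1. (\<nexists>i. k = i * e + \<mu>) \<longrightarrow> degree (gk f k) = d ^ k \<and> degree (hk f k) = d ^ k)))
    \<and>
    (mu_idx f < nu_idx f \<and> eps_idx f < \<infinity> \<longrightarrow>
      e_idx f = eps_idx f + mu_idx f \<and>
      (let \<mu> = the_enat (mu_idx f); \<epsilon> = the_enat (eps_idx f); e = the_enat (e_idx f);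
           T = Tk f \<epsilon>; \<delta> = delta f in
        (\<forall>k\<ge>1. int (degree (gk f (\<mu> + k))) = int (d ^ (\<mu> + k)) - int (\<delta> * Sk f k) \<and>
                int (degree (hk f (\<mu> + k))) = int (d ^ (\<mu> + k)) - int (\<delta> * Tk f k)) \<and>
        (\<forall>i\<ge>1. Sk f (i * e) = \<delta> ^ i * T ^ i \<and> Tk f (i * e) = 0) \<and>
        (\<forall>i. Tk f (i * e + \<epsilon>) = \<delta> ^ i * T ^ (i + 1) \<and> Sk f (i * e + \<epsilon>) = 0) \<and>
        (\<forall>k\<ge>1. (\<nexists>i. i \<ge> 1 \<and> k = i * e) \<longrightarrow> (\<nexists>i. k = i * e + \<epsilon>) \<longrightarrow>
                Sk f k = 0 \<and> Tk f k = 0)))"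
proof -
  interpret itf f using assms by unfold_locales
  have dd: "d = rdeg f" by (simp add: d_def)
  interpret A: absit d "\<lambda>k. degree (gk f k)" "\<lambda>k. degree (hk f k)" "Sk f" "Tk f"
  proof unfold_locales
    show "1 \<le> d" using assms dd by simp
    show "\<And>k. max (degree (gk f k)) (degree (hk f k)) = d ^ k" using maxk dd by simp
    show "degree (gk f 0) = 1" "degree (hk f 0) = 0" "Sk f 0 = 1" "Tk f 0 = 0"
      using base by (simp_all add: Sk_def Tk_def)
    show "\<And>k. Sk f k = 0 \<or> Tk f k = 0" using ST0 by (simp add: Sk_def Tk_def)
    show "\<And>j k. degree (gk f k) < degree (hk f k) \<Longrightarrow>
       d ^ (j + k) - degree (gk f (j + k)) = Sk f j * (d ^ k - degree (gk f k)) \<and>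
       d ^ (j + k) - degree (hk f (j + k)) = Tk f j * (d ^ k - degree (gk f k))"
      using CL dd by (simp add: Sk_def Tk_def)
    show "\<And>j k. degree (hk f k) < degree (gk f k) \<Longrightarrow>
       d ^ (j + k) - degree (gk f (j + k)) = (d ^ j - degree (gk f j)) * (d ^ k - degree (hk f k)) \<and>
       d ^ (j + k) - degree (hk f (j + k)) = (d ^ j - degree (hk f j)) * (d ^ k - degree (hk f k))"
      using CG dd by simp
    show "\<And>j k. 0 < Sk f k \<Longrightarrow> Sk f (j + k) = Sk f j * Sk f k \<and> Tk f (j + k) = Tk f j * Sk f k"
      using CO1 root_iff_S by (simp add: Sk_def Tk_def)
    show "\<And>j k. 0 < Tk f k \<Longrightarrow> Sk f (j + k) = (d ^ j - degree (gk f j)) * Tk f k \<and>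
       Tk f (j + k) = (d ^ j - degree (hk f j)) * Tk f k"
      using CO2 root_iff_T dd by (simp add: Sk_def Tk_def)
  qed
  have mu: "A.mu = mu_idx f" by (simp add: A.mu_def mu_idx_def)
  have nu: "A.nu = nu_idx f" by (simp add: A.nu_def nu_idx_def)
  have ee: "A.ee = e_idx f" unfolding A.ee_def e_idx_def
    by (rule arg_cong[where f=least_pos]) (simp add: fun_eq_iff root_iff_S Sk_def)
  have eps: "A.eps = eps_idx f" unfolding A.eps_def eps_idx_def
    by (rule arg_cong[where f=least_pos]) (simp add: fun_eq_iff root_iff_T Tk_def)
  have del: "A.del = delta f" by (simp add: A.del_def delta_def mu nu)
  show ?thesis using A.main_abs unfolding mu nu ee eps del .
qed

end
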